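(* Let $\mathcal V$ be a finite set of variables, $\mathcal P$ a finite set of labels, and $\mathcal C$ a finite set of nonempty subsets of $\mathcal V$. For each $C\in\mathcal C$ let $\mathcal D_C\subseteq\mathcal P^C$ and $\hat\theta_{C,\vec d}\le0$ for $\vec d\in\mathcal D_C$, and suppose every potential is permuted $\mathcal P^n$-Potts: for all $C\in\mathcal C$, all $\vec d',\vec d''\in\mathcal D_C$ with $\vec d'\ne\vec d''$, and all $i\in C$, we have $d'_i\ne d''_i$. Let $$E^*_I(\vec y,\vec z)=-\sum_{C\in\mathcal C}\sum_{\vec d\in\mathcal D_C}\hat\theta_{C,\vec d}\Big((|C|-1)z_{C,\vec d}-\sum_{\ell\in C}y_{\ell d_\ell}z_{C,\vec d}\Big)$$ for binary $y_{ip}$ ($i\in\mathcal V,p\in\mathcal P$) and $z_{C,\vec d}$, and $D(\vec\lambda)=\min_{\vec y,\vec z\text{ binary}}\big(E^*_I(\vec y,\vec z)+\sum_{i\in\mathcal V}\lambda_i(\sum_{p}y_{ip}-1)\big)$ for $\vec\lambda\in\mathbb R^{\mathcal V}$. Then $\max_{\vec\lambda}D(\vec\lambda)$ equals the optimal value of the linear program in variables $y_{ip}\in[0,1]$ ($i\in\mathcal V,p\in\mathcal P$) and $y_{C,\vec p}\in[0,1]$ ($C\in\mathcal C$, $\vec p\in\mathcal P^C$): $$\min\ \sum_{C\in\mathcal C}\sum_{\vec d\in\mathcal D_C}\hat\theta_{C,\vec d}\,y_{C,\vec d}$$ subject to $y_{C,\vec d}\le y_{\ell d_\ell}$ for all $C\in\mathcal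 C,\vec d\in\mathcal D_C,\ell\in C$; $\sum_{p\in\mathcal P}y_{ip}=1$ for all $i\in\mathcal V$; and $\sum_{\vec p\in\mathcal P^C:\,p_\ell=p_0}y_{C,\vec p}=y_{\ell p_0}$ for all $C\in\mathcal C$, $p_0\in\mathcal P$, $\ell\in C$.
   Context: The potentials are sparse pattern-based: $\theta_C(\vec x_C)=\hat\theta_{C,\vec d}$ if $\vec x_C=\vec d\in\mathcal D_C$ and $0$ otherwise, and the energy is $E(\vec x)=\sum_{C}\theta_C(\vec x_C)$. A labeling $\vec p\in\mathcal P^C$ is a map $C\to\mathcal P$ with value $p_\ell$ at $\ell\in C$. $D$ is the Lagrangian dual of the submodular relaxation obtained by relaxing the consistency constraints $\sum_p y_{ip}=1$. *)

theory Defs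
  imports Complex_Main "HOL-Library.FuncSet"
begin

text \<open>Labelings of a clique C are extensional maps (PiE C (%_. P)) (value undefined outside C).
  y :: 'v \<Rightarrow> 'p \<Rightarrow> real are the unary variables y_{ip};
  z / yC :: 'v set \<Rightarrow> ('v \<Rightarrow> 'p) \<Rightarrow> real are the clique variables.\<close>

definition Estar ::
  "'v set set \<Rightarrow> ('v set \<Rightarrow> ('v \<Rightarrow> 'p) set) \<Rightarrow> ('v set \<Rightarrow> ('v \<Rightarrow> 'p) \<Rightarrow> real)
   \<Rightarrow> ('v \<Rightarrow> 'p \<Rightarrow> real) \<Rightarrow> ('v set \<Rightarrow> ('v \<Rightarrow> 'p) \<Rightarrow> real) \<Rightarrow> real" where
  "Estar Cs D th y z =
     - (\<Sum>C\<in>Cs. \<Sum>d\<in>D C. th C d *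
          ((real (card C) - 1) * z C d - (\<Sum>l\<in>C. y l (d l) * z C d)))"

definition binary_y :: "'v set \<Rightarrow> 'p set \<Rightarrow> ('v \<Rightarrow> 'p \<Rightarrow> real) \<Rightarrow> bool" where
  "binary_y V P y \<longleftrightarrow> (\<forall>i\<in>V. \<forall>p\<in>P. y i p \<in> {0, 1})"

definition binary_z ::
  "'v set set \<Rightarrow> ('v set \<Rightarrow> ('v \<Rightarrow> 'p) set) \<Rightarrow> ('v set \<Rightarrow> ('v \<Rightarrow> 'p) \<Rightarrow> real) \<Rightarrow> bool" where
  "binary_z Cs D z \<longleftrightarrow> (\<forall>C\<in>Cs. \<forall>d\<in>D C. z C d \<in> {0, 1})"

text \<open>Lagrangian dual D(lambda): minimum over binary y, z (a finite nonempty set of values).\<close>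
definition dual_fun ::
  "'v set \<Rightarrow> 'p set \<Rightarrow> 'v set set \<Rightarrow> ('v set \<Rightarrow> ('v \<Rightarrow> 'p) set)
   \<Rightarrow> ('v set \<Rightarrow> ('v \<Rightarrow> 'p) \<Rightarrow> real) \<Rightarrow> ('v \<Rightarrow> real) \<Rightarrow> real" where
  "dual_fun V P Cs D th lam =
     Inf {Estar Cs D th y z + (\<Sum>i\<in>V. lam i * ((\<Sum>p\<in>P. y i p) - 1)) | y z.
            binary_y V P y \<and> binary_z Cs D z}"

definition lp_feasible ::
  "'v set \<Rightarrow> 'p set \<Rightarrow> 'v set set \<Rightarrow> ('v set \<Rightarrow> ('v \<Rightarrow> 'p) set)
   \<Rightarrow> ('v \<Rightarrow> 'p \<Rightarrow> real) \<Rightarrow> ('v set \<Rightarrow> ('v \<Rightarrow> 'p) \<Rightarrow> real) \<Rightarrow> bool" where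
  "lp_feasible V P Cs D y yC \<longleftrightarrow>
     (\<forall>i\<in>V. \<forall>p\<in>P. 0 \<le> y i p \<and> y i p \<le> 1) \<and>
     (\<forall>C\<in>Cs. \<forall>p\<in>C \<rightarrow>\<^sub>E P. 0 \<le> yC C p \<and> yC C p \<le> 1) \<and>
     (\<forall>C\<in>Cs. \<forall>d\<in>D C. \<forall>l\<in>C. yC C d \<le> y l (d l)) \<and>
     (\<forall>i\<in>V. (\<Sum>p\<in>P. y i p) = 1) \<and>
     (\<forall>C\<in>Cs. \<forall>p0\<in>P. \<forall>l\<in>C. (\<Sum>p\<in>{p \<in> C \<rightarrow>\<^sub>E P. p l = p0}. yC C p) = y l p0)"

definition lp_obj ::
  "'v set set \<Rightarrow> ('v set \<Rightarrow> ('v \<Rightarrow> 'p) set) \<Rightarrow> ('v set \<Rightarrow> ('v \<Rightarrow> 'p) \<Rightarrow> real)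
   \<Rightarrow> ('v set \<Rightarrow> ('v \<Rightarrow> 'p) \<Rightarrow> real) \<Rightarrow> real" where
  "lp_obj Cs D th yC = (\<Sum>C\<in>Cs. \<Sum>d\<in>D C. th C d * yC C d)"

end

theory Submission
  imports Defs "HOL-Analysis.Analysis"
begin


definition dotp :: "'i set \<Rightarrow> ('i \<Rightarrow> real) \<Rightarrow> ('i \<Rightarrow> real) \<Rightarrow> real" where
  "dotp I u w = (\<Sum>i\<in>I. u i * w i)"

lemma dotp_lin: "dotp I (\<lambda>i. s * u i - t * w i) v = s * dotp I u v - t * dotp I w v"
  by (simp add: dotp_def sum_subtractf sum_distrib_left algebra_simps)

lemma dotp_lin2: "dotp I y (\<lambda>i. s * u i - t * w i) = s * dotp I y u - t * dotp I y w"
  by (simp add: dotp_def sum_subtractf sum_distrib_left algebra_simps)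

lemma farkas:
  assumes "finite I" "finite G"
  shows "(\<exists>\<mu>. (\<forall>j\<in>G. \<mu> j \<ge> 0) \<and> (\<forall>i\<in>I. (\<Sum>j\<in>G. \<mu> j * A j i) = c i))
       \<or> (\<exists>y. (\<forall>j\<in>G. dotp I y (A j) \<ge> 0) \<and> dotp I y c < 0)"
  using assms(2)
proof (induction G arbitrary: A c rule: finite_induct)
  case empty
  show ?case
  proof (cases "\<forall>i\<in>I. c i = 0")
    case True then show ?thesis by auto
  next
    case False
    then obtain i0 where i0: "i0 \<in> I" "c i0 \<noteq> 0" by auto
    have "dotp I (\<lambda>i. - c i) c = - (\<Sum>i\<in>I. c i * c i)" by (simp add: dotp_def sum_negf)
    moreover have "(\<Sum>i\<in>I. c i * c i) > 0"
    proof -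
      have "(\<Sum>i\<in>I. c i * c i) \<ge> c i0 * c i0"
        by (rule member_le_sum) (use i0 assms(1) in auto)
      moreover have "c i0 * c i0 > 0" using i0 by (auto simp add: zero_less_mult_iff linorder_neq_iff)
      ultimately show ?thesis by linarith
    qed
    ultimately have "dotp I (\<lambda>i. - c i) c < 0" by linarith
    then show ?thesis by blast
  qed
next
  case (insert j G)
  from insert.IH[of A c] show ?case
  proof
    assume "\<exists>\<mu>. (\<forall>j\<in>G. \<mu> j \<ge> 0) \<and> (\<forall>i\<in>I. (\<Sum>j\<in>G. \<mu> j * A j i) = c i)"
    then obtain \<mu> where mu: "\<forall>j\<in>G. \<mu> j \<ge> 0" "\<forall>i\<in>I. (\<Sum>j\<in>G. \<mu> j * A j i) = c i" by blast
    let ?m = "\<lambda>k. if k = j then 0 else \<mu> k"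
    have "\<forall>i\<in>I. (\<Sum>k\<in>insert j G. ?m k * A k i) = c i"
    proof
      fix i assume "i \<in> I"
      have "(\<Sum>k\<in>insert j G. ?m k * A k i) = (\<Sum>k\<in>G. ?m k * A k i)"
        using insert.hyps by simp
      also have "\<dots> = (\<Sum>k\<in>G. \<mu> k * A k i)"
        by (rule sum.cong) (use insert.hyps in auto)
      finally show "(\<Sum>k\<in>insert j G. ?m k * A k i) = c i" using mu \<open>i\<in>I\<close> by simp
    qed
    moreover have "\<forall>k\<in>insert j G. ?m k \<ge> 0" using mu by auto
    ultimately show ?thesis by (intro disjI1 exI[of _ ?m]) blast
  next
    assume "\<exists>y. (\<forall>j\<in>G. dotp I y (A j) \<ge> 0) \<and> dotp I y c < 0"
    then obtain y where y: "\<forall>k\<in>G. dotp I y (A k) \<ge> 0" "dotp I y c < 0" by blast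
    show ?thesis
    proof (cases "dotp I y (A j) \<ge> 0")
      case True then show ?thesis using y by auto
    next
      case False
      define s where "s = dotp I y (A j)"
      have s: "s < 0" using False s_def by simp
      define A' where "A' = (\<lambda>k i. s * A k i - dotp I y (A k) * A j i)"
      define c' where "c' = (\<lambda>i. s * c i - dotp I y c * A j i)"
      from insert.IH[of A' c'] show ?thesis
      proof
        assume "\<exists>\<mu>. (\<forall>j\<in>G. \<mu> j \<ge> 0) \<and> (\<forall>i\<in>I. (\<Sum>j\<in>G. \<mu> j * A' j i) = c' i)"
        then obtain \<mu> where mu: "\<forall>j\<in>G. \<mu> j \<ge> 0" "\<forall>i\<in>I. (\<Sum>j\<in>G. \<mu> j * A' j i) = c' i" by blast
        define co where "co = (dotp I y c - (\<Sum>k\<in>G. \<mu> k * dotp I y (A k))) / s"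
        have "(\<Sum>k\<in>G. \<mu> k * dotp I y (A k)) \<ge> 0"
          using mu y by (intro sum_nonneg) auto
        then have co: "co \<ge> 0" unfolding co_def using s y
          by (intro divide_nonpos_neg) auto
        let ?m = "\<lambda>k. if k = j then co else \<mu> k"
        have "\<forall>i\<in>I. (\<Sum>k\<in>insert j G. ?m k * A k i) = c i"
        proof
          fix i assume i: "i \<in> I"
          have "(\<Sum>k\<in>insert j G. ?m k * A k i) = co * A j i + (\<Sum>k\<in>G. ?m k * A k i)"
            using insert.hyps by simp
          also have "(\<Sum>k\<in>G. ?m k * A k i) = (\<Sum>k\<in>G. \<mu> k * A k i)"
            by (rule sum.cong) (use insert.hyps in auto)
          finally have e1: "(\<Sum>k\<in>insert j G. ?m k * A k i) = co * A j i + (\<Sum>k\<in>G. \<mu> k * A k i)" .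
          have "(\<Sum>k\<in>G. \<mu> k * A' k i) = s * (\<Sum>k\<in>G. \<mu> k * A k i) - (\<Sum>k\<in>G. \<mu> k * dotp I y (A k)) * A j i"
            by (simp add: A'_def sum_subtractf sum_distrib_left sum_distrib_right algebra_simps)
          with mu(2) i have "s * (\<Sum>k\<in>G. \<mu> k * A k i) - (\<Sum>k\<in>G. \<mu> k * dotp I y (A k)) * A j i = s * c i - dotp I y c * A j i"
            by (simp add: c'_def)
          then have "s * c i = s * ((\<Sum>k\<in>G. \<mu> k * A k i) + co * A j i)"
            using s unfolding co_def by (simp add: field_simps)
          then have "c i = (\<Sum>k\<in>G. \<mu> k * A k i) + co * A j i" using s by simp
          with e1 show "(\<Sum>k\<in>insert j G. ?m k * A k i) = c i" by simp
        qed
        moreover have "\<forall>k\<in>insert j G. ?m k \<ge> 0" using mu co by auto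
        ultimately show ?thesis by (intro disjI1 exI[of _ ?m]) blast
      next
        assume "\<exists>y. (\<forall>j\<in>G. dotp I y (A' j) \<ge> 0) \<and> dotp I y c' < 0"
        then obtain y' where y': "\<forall>k\<in>G. dotp I y' (A' k) \<ge> 0" "dotp I y' c' < 0" by blast
        define z where "z = (\<lambda>i. s * y' i - dotp I y' (A j) * y i)"
        have zA: "dotp I z (A k) = dotp I y' (A' k)" for k
          unfolding z_def dotp_lin A'_def dotp_lin2 s_def by simp
        have "dotp I z c = dotp I y' c'"
          unfolding z_def dotp_lin c'_def dotp_lin2 s_def by simp
        moreover have "dotp I z (A j) = 0"
          unfolding z_def dotp_lin s_def by simp
        ultimately show ?thesis using zA y' by (intro disjI2 exI[of _ z]) auto
      qed
    qed
  qed
qed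



definition I3 :: "'v set \<Rightarrow> 'v option option set" where
  "I3 V = insert None (insert (Some None) (Some ` Some ` V))"

lemma finite_I3: "finite V \<Longrightarrow> finite (I3 V)" by (simp add: I3_def)

lemma sum_I3: "finite V \<Longrightarrow> (\<Sum>k\<in>I3 V. f k) = f None + f (Some None) + (\<Sum>i\<in>V. f (Some (Some i)))"
proof -
  assume V: "finite V"
  have "(\<Sum>k\<in>Some ` Some ` V. f k) = (\<Sum>i\<in>V. f (Some (Some i)))"
    by (subst image_image, subst sum.reindex) (auto simp: inj_on_def)
  moreover have "Some None \<notin> Some ` Some ` V" by auto
  moreover have "None \<notin> insert (Some None) (Some ` Some ` V)" by auto
  ultimately show ?thesis using V by (simp add: I3_def add.assoc)
qed

lemma sum_optG: "finite X \<Longrightarrow> (\<Sum>g\<in>insert None (Some ` X). f g) = f None + (\<Sum>x\<in>X. f (Some x))"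
  by (simp add: sum.reindex)

definition feas :: "'x set \<Rightarrow> 'v set \<Rightarrow> ('x \<Rightarrow> 'v \<Rightarrow> real) \<Rightarrow> ('x \<Rightarrow> real) \<Rightarrow> bool" where
  "feas X V b \<mu> \<longleftrightarrow> (\<forall>x\<in>X. 0 \<le> \<mu> x) \<and> (\<Sum>x\<in>X. \<mu> x) = 1 \<and> (\<forall>i\<in>V. (\<Sum>x\<in>X. \<mu> x * b x i) = 0)"

lemma feas_ident:
  assumes "feas X V b \<mu>" "finite X" "finite V"
  shows "(\<Sum>x\<in>X. \<mu> x * (\<alpha> + \<gamma> * a x + (\<Sum>i\<in>V. \<beta> i * b x i))) = \<alpha> + \<gamma> * (\<Sum>x\<in>X. \<mu> x * a x)"
proof -
  have "(\<Sum>x\<in>X. \<mu> x * (\<Sum>i\<in>V. \<beta> i * b x i)) = (\<Sum>x\<in>X. \<Sum>i\<in>V. \<beta> i * (\<mu> x * b x i))"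
    by (simp add: sum_distrib_left algebra_simps)
  also have "\<dots> = (\<Sum>i\<in>V. \<Sum>x\<in>X. \<beta> i * (\<mu> x * b x i))" by (rule sum.swap)
  also have "\<dots> = (\<Sum>i\<in>V. \<beta> i * (\<Sum>x\<in>X. \<mu> x * b x i))" by (simp add: sum_distrib_left)
  also have "\<dots> = 0" using assms(1) by (simp add: feas_def)
  finally have h: "(\<Sum>x\<in>X. \<mu> x * (\<Sum>i\<in>V. \<beta> i * b x i)) = 0" .
  have "(\<Sum>x\<in>X. \<mu> x * (\<alpha> + \<gamma> * a x + (\<Sum>i\<in>V. \<beta> i * b x i)))
      = \<alpha> * (\<Sum>x\<in>X. \<mu> x) + \<gamma> * (\<Sum>x\<in>X. \<mu> x * a x) + (\<Sum>x\<in>X. \<mu> x * (\<Sum>i\<in>V. \<beta> i * b x i))"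
    by (simp add: distrib_left sum.distrib sum_distrib_left mult.commute mult.left_commute)
  then show ?thesis using h assms(1) by (simp add: feas_def)
qed

lemma lp_dual:
  fixes X :: "'x set" and V :: "'v set" and a :: "'x \<Rightarrow> real" and b :: "'x \<Rightarrow> 'v \<Rightarrow> real"
  assumes X: "finite X" and V: "finite V" and ex: "\<exists>\<mu>. feas X V b \<mu>"
  shows "\<exists>v. (\<exists>\<mu>. feas X V b \<mu> \<and> (\<Sum>x\<in>X. \<mu> x * a x) \<le> v)
           \<and> (\<exists>lam. \<forall>x\<in>X. v \<le> a x + (\<Sum>i\<in>V. lam i * b x i))"
proof -
  define Vals where "Vals = {(\<Sum>x\<in>X. \<mu> x * a x) | \<mu>. feas X V b \<mu>}"
  define v where "v = Inf Vals"
  have ne: "Vals \<noteq> {}" using ex by (auto simp: Vals_def)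
  have lb: "- (\<Sum>x\<in>X. \<bar>a x\<bar>) \<le> (\<Sum>x\<in>X. \<mu> x * a x)" if "feas X V b \<mu>" for \<mu>
  proof -
    have "- (\<Sum>x\<in>X. \<bar>a x\<bar>) = (\<Sum>x\<in>X. - \<bar>a x\<bar>)" by (simp add: sum_negf)
    also have "\<dots> \<le> (\<Sum>x\<in>X. \<mu> x * a x)"
    proof (rule sum_mono)
      fix x assume x: "x \<in> X"
      have m0: "0 \<le> \<mu> x" using that x by (auto simp: feas_def)
      have "\<mu> x \<le> (\<Sum>x\<in>X. \<mu> x)"
        by (rule member_le_sum) (use that x X in \<open>auto simp: feas_def\<close>)
      then have m1: "\<mu> x \<le> 1" using that by (simp add: feas_def)
      have "- \<bar>a x\<bar> \<le> - (\<mu> x * \<bar>a x\<bar>)" using m0 m1 by (simp add: mult_left_le_one_le)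
      also have "\<dots> \<le> \<mu> x * a x" using m0
        by (metis abs_ge_minus_self abs_mult abs_of_nonneg minus_le_iff)
      finally show "- \<bar>a x\<bar> \<le> \<mu> x * a x" .
    qed
    finally show ?thesis .
  qed
  have bdd: "bdd_below Vals" unfolding Vals_def using lb by (intro bdd_belowI) blast
  have vle: "v \<le> (\<Sum>x\<in>X. \<mu> x * a x)" if "feas X V b \<mu>" for \<mu>
    unfolding v_def by (rule cInf_lower[OF _ bdd]) (use that in \<open>auto simp: Vals_def\<close>)
  have vge: "w \<le> v" if "\<And>\<mu>. feas X V b \<mu> \<Longrightarrow> w \<le> (\<Sum>x\<in>X. \<mu> x * a x)" for w
    unfolding v_def by (rule cInf_greatest[OF ne]) (use that in \<open>auto simp: Vals_def\<close>)
  define A where "A = (\<lambda>x k. case k of None \<Rightarrow> 0 | Some None \<Rightarrow> a x - v | Some (Some i) \<Rightarrow> b x i)"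
  define c where "c = (\<lambda>k::'v option option. case k of Some None \<Rightarrow> (-1::real) | _ \<Rightarrow> 0)"
  have dualpart: "\<exists>lam. \<forall>x\<in>X. v \<le> a x + (\<Sum>i\<in>V. lam i * b x i)"
    using farkas[OF finite_I3[OF V] X, of A c]
  proof
    assume "\<exists>\<mu>. (\<forall>j\<in>X. \<mu> j \<ge> 0) \<and> (\<forall>i\<in>I3 V. (\<Sum>j\<in>X. \<mu> j * A j i) = c i)"
    then obtain \<mu> where mu: "\<forall>j\<in>X. \<mu> j \<ge> 0" "\<forall>i\<in>I3 V. (\<Sum>j\<in>X. \<mu> j * A j i) = c i" by blast
    have e1: "(\<Sum>x\<in>X. \<mu> x * (a x - v)) = -1"
      using mu(2)[rule_format, of "Some None"] by (simp add: I3_def A_def c_def)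
    have e2: "(\<Sum>x\<in>X. \<mu> x * b x i) = 0" if "i \<in> V" for i
      using mu(2)[rule_format, of "Some (Some i)"] that by (simp add: I3_def A_def c_def)
    define S where "S = (\<Sum>x\<in>X. \<mu> x)"
    have e1': "(\<Sum>x\<in>X. \<mu> x * a x) - v * S = -1"
      using e1 by (simp add: S_def right_diff_distrib sum_subtractf sum_distrib_left mult.commute)
    have "S \<ge> 0" unfolding S_def using mu by (simp add: sum_nonneg)
    moreover have "S \<noteq> 0"
    proof
      assume "S = 0"
      then have "\<forall>x\<in>X. \<mu> x = 0" using mu(1) X unfolding S_def by (simp add: sum_nonneg_eq_0_iff)
      then show False using e1 by simp
    qed
    ultimately have Spos: "S > 0" by simp
    define \<mu>' where "\<mu>' = (\<lambda>x. \<mu> x / S)"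
    have divsum: "(\<Sum>x\<in>X. \<mu>' x * f x) = (\<Sum>x\<in>X. \<mu> x * f x) / S" for f
    proof -
      have "(\<Sum>x\<in>X. \<mu>' x * f x) = (\<Sum>x\<in>X. \<mu> x * f x / S)"
        by (rule sum.cong) (auto simp: \<mu>'_def)
      also have "\<dots> = (\<Sum>x\<in>X. \<mu> x * f x) / S" by (rule sum_divide_distrib[symmetric])
      finally show ?thesis .
    qed
    have "feas X V b \<mu>'"
      unfolding feas_def
    proof (intro conjI ballI)
      show "0 \<le> \<mu>' x" if "x \<in> X" for x using mu(1) Spos that by (simp add: \<mu>'_def)
      show "(\<Sum>x\<in>X. \<mu>' x) = 1" using divsum[of "\<lambda>_. 1"] Spos by (simp add: S_def)
      show "(\<Sum>x\<in>X. \<mu>' x * b x i) = 0" if "i \<in> V" for i using divsum[of "\<lambda>x. b x i"] e2[OF that] by simp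
    qed
    from vle[OF this] have "v \<le> (\<Sum>x\<in>X. \<mu> x * a x) / S"
      using divsum[of a] by simp
    then have "v * S \<le> (\<Sum>x\<in>X. \<mu> x * a x)" using Spos by (simp add: pos_le_divide_eq)
    with e1' show ?thesis by simp
  next
    assume "\<exists>y. (\<forall>j\<in>X. dotp (I3 V) y (A j) \<ge> 0) \<and> dotp (I3 V) y c < 0"
    then obtain y where y: "\<forall>j\<in>X. dotp (I3 V) y (A j) \<ge> 0" "dotp (I3 V) y c < 0" by blast
    have "dotp (I3 V) y c = - y (Some None)"
      by (simp add: dotp_def sum_I3[OF V] c_def)
    with y have g: "y (Some None) > 0" by simp
    define lam where "lam = (\<lambda>i. y (Some (Some i)) / y (Some None))"
    have "v \<le> a x + (\<Sum>i\<in>V. lam i * b x i)" if x: "x \<in> X" for x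
    proof -
      have "dotp (I3 V) y (A x) = y (Some None) * (a x - v) + (\<Sum>i\<in>V. y (Some (Some i)) * b x i)"
        by (simp add: dotp_def sum_I3[OF V] A_def)
      with y(1) x have "0 \<le> y (Some None) * (a x - v) + (\<Sum>i\<in>V. y (Some (Some i)) * b x i)" by metis
      then have "0 \<le> (a x - v) + (\<Sum>i\<in>V. y (Some (Some i)) * b x i) / y (Some None)"
        using g by (simp add: field_simps)
      moreover have "(\<Sum>i\<in>V. y (Some (Some i)) * b x i) / y (Some None) = (\<Sum>i\<in>V. lam i * b x i)"
        by (simp add: lam_def sum_divide_distrib)
      ultimately show ?thesis by simp
    qed
    then show ?thesis by blast
  qed
  define B where "B = (\<lambda>g k. case g of None \<Rightarrow> (case k of Some None \<Rightarrow> 1 | _ \<Rightarrow> 0)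
      | Some x \<Rightarrow> (case k of None \<Rightarrow> 1 | Some None \<Rightarrow> a x | Some (Some i) \<Rightarrow> b x i))"
  define c2 where "c2 = (\<lambda>k::'v option option. case k of None \<Rightarrow> 1 | Some None \<Rightarrow> v | _ \<Rightarrow> (0::real))"
  have primpart: "\<exists>\<mu>. feas X V b \<mu> \<and> (\<Sum>x\<in>X. \<mu> x * a x) \<le> v"
    using farkas[OF finite_I3[OF V] finite.insertI[OF finite_imageI[OF X]], of None Some B c2]
  proof (elim disjE)
    assume "\<exists>\<mu>. (\<forall>j\<in>insert None (Some ` X). \<mu> j \<ge> 0) \<and> (\<forall>i\<in>I3 V. (\<Sum>j\<in>insert None (Some ` X). \<mu> j * B j i) = c2 i)"
    then obtain \<mu> where mu: "\<forall>j\<in>insert None (Some ` X). \<mu> j \<ge> 0"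
      "\<forall>i\<in>I3 V. (\<Sum>j\<in>insert None (Some ` X). \<mu> j * B j i) = c2 i" by blast
    have e0: "(\<Sum>x\<in>X. \<mu> (Some x)) = 1"
      using mu(2)[rule_format, of None] by (simp add: I3_def sum_optG[OF X] B_def c2_def)
    have e1: "\<mu> None + (\<Sum>x\<in>X. \<mu> (Some x) * a x) = v"
      using mu(2)[rule_format, of "Some None"] by (simp add: I3_def sum_optG[OF X] B_def c2_def)
    have e2: "(\<Sum>x\<in>X. \<mu> (Some x) * b x i) = 0" if "i \<in> V" for i
      using mu(2)[rule_format, of "Some (Some i)"] that by (simp add: I3_def sum_optG[OF X] B_def c2_def)
    have "feas X V b (\<lambda>x. \<mu> (Some x))" using mu(1) e0 e2 by (auto simp: feas_def)
    moreover have "(\<Sum>x\<in>X. \<mu> (Some x) * a x) \<le> v" using e1 mu(1) by auto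
    ultimately show ?thesis by blast
  next
    assume "\<exists>y. (\<forall>j\<in>insert None (Some ` X). dotp (I3 V) y (B j) \<ge> 0) \<and> dotp (I3 V) y c2 < 0"
    then obtain y where y: "\<forall>j\<in>insert None (Some ` X). dotp (I3 V) y (B j) \<ge> 0" "dotp (I3 V) y c2 < 0" by blast
    define \<alpha> where "\<alpha> = y None"
    define \<gamma> where "\<gamma> = y (Some None)"
    define \<beta> where "\<beta> = (\<lambda>i. y (Some (Some i)))"
    have gam: "\<gamma> \<ge> 0" using y(1) by (simp add: dotp_def sum_I3[OF V] B_def \<gamma>_def)
    have pos: "0 \<le> \<alpha> + \<gamma> * a x + (\<Sum>i\<in>V. \<beta> i * b x i)" if "x \<in> X" for x
      using y(1) that by (simp add: dotp_def sum_I3[OF V] B_def \<alpha>_def \<beta>_def \<gamma>_def mult.commute)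
    have neg: "\<alpha> + \<gamma> * v < 0" using y(2) by (simp add: dotp_def sum_I3[OF V] c2_def \<alpha>_def \<gamma>_def mult.commute)
    have key: "0 \<le> \<alpha> + \<gamma> * (\<Sum>x\<in>X. \<mu> x * a x)" if "feas X V b \<mu>" for \<mu>
    proof -
      have "0 \<le> (\<Sum>x\<in>X. \<mu> x * (\<alpha> + \<gamma> * a x + (\<Sum>i\<in>V. \<beta> i * b x i)))"
        using that pos by (intro sum_nonneg) (auto simp: feas_def)
      then show ?thesis using feas_ident[OF that X V] by simp
    qed
    show ?thesis
    proof (cases "\<gamma> = 0")
      case True
      then show ?thesis using key ex neg by auto
    next
      case False
      then have gp: "\<gamma> > 0" using gam by simp
      have "- \<alpha> / \<gamma> \<le> v"
      proof (rule vge)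
        fix \<mu> assume "feas X V b \<mu>"
        from key[OF this] gp show "- \<alpha> / \<gamma> \<le> (\<Sum>x\<in>X. \<mu> x * a x)"
          by (simp add: field_simps)
      qed
      then have "0 \<le> \<alpha> + \<gamma> * v" using gp by (simp add: field_simps)
      with neg show ?thesis by simp
    qed
  qed
  show ?thesis using dualpart primpart by blast
qed



definition Xset :: "'v set \<Rightarrow> 'p set \<Rightarrow> ('v \<Rightarrow> 'p \<Rightarrow> real) set" where
  "Xset V P = (\<lambda>f i p. if i \<in> V \<and> p \<in> P then f (i,p) else 0) ` (V \<times> P \<rightarrow>\<^sub>E {0,1})"

definition Fv :: "'v set set \<Rightarrow> ('v set \<Rightarrow> ('v \<Rightarrow> 'p) set) \<Rightarrow> ('v set \<Rightarrow> ('v \<Rightarrow> 'p) \<Rightarrow> real)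
   \<Rightarrow> ('v \<Rightarrow> 'p \<Rightarrow> real) \<Rightarrow> real" where
  "Fv Cs D th x = (\<Sum>C\<in>Cs. \<Sum>d\<in>D C. th C d * (if \<forall>l\<in>C. x l (d l) = 1 then 1 else 0))"

definition gv :: "'p set \<Rightarrow> ('v \<Rightarrow> 'p \<Rightarrow> real) \<Rightarrow> 'v \<Rightarrow> real" where
  "gv P x i = (\<Sum>p\<in>P. x i p) - 1"

definition restr :: "'v set \<Rightarrow> 'p set \<Rightarrow> ('v \<Rightarrow> 'p \<Rightarrow> real) \<Rightarrow> ('v \<Rightarrow> 'p \<Rightarrow> real)" where
  "restr V P y = (\<lambda>i p. if i \<in> V \<and> p \<in> P then y i p else 0)"

lemma finite_Xset: "finite V \<Longrightarrow> finite P \<Longrightarrow> finite (Xset V P)"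
  unfolding Xset_def by (intro finite_imageI finite_PiE) auto

lemma Xset_binary: "x \<in> Xset V P \<Longrightarrow> binary_y V P x"
  unfolding Xset_def binary_y_def by (auto simp: PiE_iff)

lemma restr_in_Xset: "binary_y V P y \<Longrightarrow> restr V P y \<in> Xset V P"
  unfolding Xset_def
proof (rule image_eqI[where x="restrict (\<lambda>(i,p). y i p) (V \<times> P)"])
  assume "binary_y V P y"
  then show "restrict (\<lambda>(i,p). y i p) (V \<times> P) \<in> V \<times> P \<rightarrow>\<^sub>E {0,1}"
    by (auto simp: binary_y_def)
qed (auto simp: restr_def fun_eq_iff)

lemma term_ge:
  fixes th z :: real and Y :: "'v \<Rightarrow> real"
  assumes "finite C" "C \<noteq> {}" "\<forall>l\<in>C. Y l \<in> {0,1}" "z \<in> {0,1}" "th \<le> 0"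
  shows "th * (if \<forall>l\<in>C. Y l = 1 then 1 else 0) \<le> - (th * ((real (card C) - 1) * z - (\<Sum>l\<in>C. Y l * z)))"
proof (cases "z = 0")
  case True then show ?thesis using assms by simp
next
  case False
  then have z: "z = 1" using assms by simp
  show ?thesis
  proof (cases "\<forall>l\<in>C. Y l = 1")
    case True
    then have "(\<Sum>l\<in>C. Y l * z) = real (card C)" using z by simp
    then show ?thesis using True z by (simp add: algebra_simps)
  next
    case False
    then obtain l0 where l0: "l0 \<in> C" "Y l0 = 0" using assms(3) by auto
    have "(\<Sum>l\<in>C. Y l * z) = (\<Sum>l\<in>C - {l0}. Y l)"
      using z l0 assms(1) by (simp add: sum.remove)
    also have "\<dots> \<le> (\<Sum>l\<in>C - {l0}. 1)"
      using assms(3) by (intro sum_mono) auto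
    also have "\<dots> = real (card C) - 1"
    proof -
      have "card C > 0" using l0 assms(1) card_gt_0_iff by blast
      then have "card C \<ge> 1" by simp
      then have "real (card C - 1) = real (card C) - 1" by (simp add: of_nat_diff)
      moreover have "card (C - {l0}) = card C - 1" using l0 assms(1) by (simp add: card_Diff_singleton)
      ultimately show ?thesis by simp
    qed
    finally have "(\<Sum>l\<in>C. Y l * z) \<le> real (card C) - 1" .
    then have "0 \<le> - (th * ((real (card C) - 1) * z - (\<Sum>l\<in>C. Y l * z)))"
      using z assms(5) by (simp add: mult_nonpos_nonneg)
    moreover have "th * (if \<forall>l\<in>C. Y l = 1 then 1 else 0) = 0" using False by auto
    ultimately show ?thesis by linarith
  qed
qed

lemma term_eq:
  fixes th :: real and Y :: "'v \<Rightarrow> real"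
  assumes "finite C"
  shows "- (th * ((real (card C) - 1) * (if \<forall>l\<in>C. Y l = 1 then 1 else 0)
            - (\<Sum>l\<in>C. Y l * (if \<forall>l\<in>C. Y l = 1 then 1 else 0))))
         = th * (if \<forall>l\<in>C. Y l = 1 then 1 else 0)"
proof (cases "\<forall>l\<in>C. Y l = 1")
  case True
  then have "(\<Sum>l\<in>C. Y l * 1) = real (card C)" by simp
  then show ?thesis using True by (simp add: algebra_simps)
qed simp

locale setting =
  fixes V :: "'v set" and P :: "'p set" and Cs :: "'v set set"
    and D :: "'v set \<Rightarrow> ('v \<Rightarrow> 'p) set"
    and th :: "'v set \<Rightarrow> ('v \<Rightarrow> 'p) \<Rightarrow> real"
  assumes finV: "finite V" and finP: "finite P" and Pne: "P \<noteq> {}"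
    and finCs: "finite Cs"
    and cliques: "\<forall>C\<in>Cs. C \<noteq> {} \<and> C \<subseteq> V"
    and Dsub: "\<forall>C\<in>Cs. D C \<subseteq> C \<rightarrow>\<^sub>E P"
    and thnonpos: "\<forall>C\<in>Cs. \<forall>d\<in>D C. th C d \<le> 0"
    and potts: "\<forall>C\<in>Cs. \<forall>d'\<in>D C. \<forall>d''\<in>D C. d' \<noteq> d'' \<longrightarrow> (\<forall>i\<in>C. d' i \<noteq> d'' i)"
begin

lemma finC: "C \<in> Cs \<Longrightarrow> finite C" using cliques finV finite_subset by blast

lemma finD: "C \<in> Cs \<Longrightarrow> finite (D C)"
  using Dsub finite_subset finite_PiE finC finP by metis

lemma Dmem: "C \<in> Cs \<Longrightarrow> d \<in> D C \<Longrightarrow> l \<in> C \<Longrightarrow> l \<in> V \<and> d l \<in> P"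
  using Dsub cliques by (auto simp: PiE_iff)

lemma elem_ge:
  assumes "binary_y V P y" "binary_z Cs D z"
  shows "Fv Cs D th (restr V P y) + (\<Sum>i\<in>V. lam i * gv P (restr V P y) i)
       \<le> Estar Cs D th y z + (\<Sum>i\<in>V. lam i * ((\<Sum>p\<in>P. y i p) - 1))"
proof -
  have g: "(\<Sum>i\<in>V. lam i * gv P (restr V P y) i) = (\<Sum>i\<in>V. lam i * ((\<Sum>p\<in>P. y i p) - 1))"
    by (auto simp: gv_def restr_def intro!: sum.cong)
  have "Fv Cs D th (restr V P y) \<le> Estar Cs D th y z"
    unfolding Fv_def Estar_def sum_negf[symmetric]
  proof (intro sum_mono)
    fix C d assume C: "C \<in> Cs" and d: "d \<in> D C"
    have "(if \<forall>l\<in>C. restr V P y l (d l) = 1 then 1 else 0) = (if \<forall>l\<in>C. y l (d l) = 1 then 1 else (0::real))"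
      using Dmem[OF C d] by (auto simp: restr_def)
    moreover have "th C d * (if \<forall>l\<in>C. y l (d l) = 1 then 1 else 0)
        \<le> - (th C d * ((real (card C) - 1) * z C d - (\<Sum>l\<in>C. y l (d l) * z C d)))"
      apply (rule term_ge)
      using finC[OF C] cliques C assms Dmem[OF C d] thnonpos C d
      by (auto simp: binary_y_def binary_z_def)
    ultimately show "th C d * (if \<forall>l\<in>C. restr V P y l (d l) = 1 then 1 else 0)
        \<le> - (th C d * ((real (card C) - 1) * z C d - (\<Sum>l\<in>C. y l (d l) * z C d)))" by simp
  qed
  with g show ?thesis by simp
qed

lemma dual_ge:
  assumes "\<forall>x\<in>Xset V P. w \<le> Fv Cs D th x + (\<Sum>i\<in>V. lam i * gv P x i)"
  shows "w \<le> dual_fun V P Cs D th lam"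
  unfolding dual_fun_def
proof (rule cInf_greatest)
  show "{Estar Cs D th y z + (\<Sum>i\<in>V. lam i * ((\<Sum>p\<in>P. y i p) - 1)) | y z.
            binary_y V P y \<and> binary_z Cs D z} \<noteq> {}"
    by (auto simp: binary_y_def binary_z_def intro!: exI[of _ "\<lambda>_ _. 0"])
next
  fix e assume "e \<in> {Estar Cs D th y z + (\<Sum>i\<in>V. lam i * ((\<Sum>p\<in>P. y i p) - 1)) | y z.
            binary_y V P y \<and> binary_z Cs D z}"
  then obtain y z where yz: "binary_y V P y" "binary_z Cs D z"
    and e: "e = Estar Cs D th y z + (\<Sum>i\<in>V. lam i * ((\<Sum>p\<in>P. y i p) - 1))" by blast
  have "w \<le> Fv Cs D th (restr V P y) + (\<Sum>i\<in>V. lam i * gv P (restr V P y) i)"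
    using assms restr_in_Xset[OF yz(1)] by blast
  also have "\<dots> \<le> e" using elem_ge[OF yz] e by simp
  finally show "w \<le> e" .
qed

lemma dual_bdd: "bdd_below {Estar Cs D th y z + (\<Sum>i\<in>V. lam i * ((\<Sum>p\<in>P. y i p) - 1)) | y z.
            binary_y V P y \<and> binary_z Cs D z}"
proof -
  define w where "w = Min ((\<lambda>x. Fv Cs D th x + (\<Sum>i\<in>V. lam i * gv P x i)) ` Xset V P)"
  have "\<forall>x\<in>Xset V P. w \<le> Fv Cs D th x + (\<Sum>i\<in>V. lam i * gv P x i)"
    unfolding w_def using finite_Xset[OF finV finP] by auto
  then have "w \<le> e" if "e \<in> {Estar Cs D th y z + (\<Sum>i\<in>V. lam i * ((\<Sum>p\<in>P. y i p) - 1)) | y z.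
            binary_y V P y \<and> binary_z Cs D z}" for e
  proof -
    from that obtain y z where yz: "binary_y V P y" "binary_z Cs D z"
      and e: "e = Estar Cs D th y z + (\<Sum>i\<in>V. lam i * ((\<Sum>p\<in>P. y i p) - 1))" by blast
    have "w \<le> Fv Cs D th (restr V P y) + (\<Sum>i\<in>V. lam i * gv P (restr V P y) i)"
      using \<open>\<forall>x\<in>Xset V P. _\<close> restr_in_Xset[OF yz(1)] by blast
    also have "\<dots> \<le> e" using elem_ge[OF yz] e by simp
    finally show "w \<le> e" .
  qed
  then show ?thesis by (intro bdd_belowI) 
qed

lemma dual_le:
  assumes "binary_y V P x"
  shows "dual_fun V P Cs D th lam \<le> Fv Cs D th x + (\<Sum>i\<in>V. lam i * gv P x i)"
proof -
  define z where "z = (\<lambda>C d. if \<forall>l\<in>C. x l (d l) = 1 then 1 else (0::real))"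
  have "Estar Cs D th x z = Fv Cs D th x"
    unfolding Estar_def Fv_def sum_negf[symmetric] z_def
    by (intro sum.cong refl term_eq finC)
  moreover have "binary_z Cs D z" by (auto simp: binary_z_def z_def)
  ultimately show ?thesis unfolding dual_fun_def
    by (intro cInf_lower[OF _ dual_bdd]) (use assms in \<open>force simp: gv_def\<close>)
qed


lemma ind_int:
  fixes a :: real
  assumes "0 \<le> a" "a \<le> 1"
  shows "((\<lambda>t::real. if t \<le> a then 1 else 0::real) has_integral a) {0..1}"
proof -
  have "((\<lambda>t::real. 1::real) has_integral a) {0..a}"
    using has_integral_const_real[of "1::real" 0 a] assms by simp
  then have "((\<lambda>t::real. if t \<in> {0..a} then 1 else 0::real) has_integral a) {0..1}"
    using assms by (subst has_integral_restrict) auto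
  then show ?thesis
    by (rule has_integral_cong[THEN iffD1, rotated]) auto
qed

lemma weak_dual:
  assumes feas: "lp_feasible V P Cs D y yC"
  shows "dual_fun V P Cs D th lam \<le> lp_obj Cs D th yC"
proof -
  define mn where "mn = (\<lambda>C d. Min ((\<lambda>l. y l (d l)) ` C))"
  define xt where "xt = (\<lambda>t i p. if t \<le> y i p then 1 else 0::real)"
  have y01: "0 \<le> y i p \<and> y i p \<le> 1" if "i \<in> V" "p \<in> P" for i p
    using feas that by (auto simp: lp_feasible_def)
  have ysum: "(\<Sum>p\<in>P. y i p) = 1" if "i \<in> V" for i
    using feas that by (auto simp: lp_feasible_def)
  have mn01: "0 \<le> mn C d \<and> mn C d \<le> 1" if C: "C \<in> Cs" and d: "d \<in> D C" for C d
  proof -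
    have "mn C d \<in> (\<lambda>l. y l (d l)) ` C"
      unfolding mn_def using finC[OF C] cliques C by (intro Min_in) auto
    then obtain l where "l \<in> C" "mn C d = y l (d l)" by auto
    then show ?thesis using y01 Dmem[OF C d] by auto
  qed
  have mnge: "t \<le> mn C d \<longleftrightarrow> (\<forall>l\<in>C. t \<le> y l (d l))" if C: "C \<in> Cs" for C d t
    unfolding mn_def using finC[OF C] cliques C by (subst Min_ge_iff) auto
  define h where "h = (\<lambda>t. (\<Sum>C\<in>Cs. \<Sum>d\<in>D C. th C d * (if t \<le> mn C d then 1 else 0))
      + (\<Sum>i\<in>V. lam i * ((\<Sum>p\<in>P. (if t \<le> y i p then 1 else 0)) - 1)))"
  have hval: "h t = Fv Cs D th (xt t) + (\<Sum>i\<in>V. lam i * gv P (xt t) i)" for t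
    unfolding h_def Fv_def gv_def xt_def
    by (intro arg_cong2[where f="(+)"] sum.cong refl arg_cong2[where f="(*)"]) (auto simp: mnge)
  have bin: "binary_y V P (xt t)" for t by (auto simp: binary_y_def xt_def)
  have le: "dual_fun V P Cs D th lam \<le> h t" for t
    unfolding hval using dual_le[OF bin] .
  have hint: "(h has_integral ((\<Sum>C\<in>Cs. \<Sum>d\<in>D C. th C d * mn C d)
      + (\<Sum>i\<in>V. lam i * ((\<Sum>p\<in>P. y i p) - 1)))) {0..1}"
    unfolding h_def
  proof (intro has_integral_add has_integral_sum finCs finD finV finP has_integral_mult_right has_integral_diff)
    show "((\<lambda>t. if t \<le> mn C d then 1 else 0) has_integral mn C d) {0..1}" if "C \<in> Cs" "d \<in> D C" for C d
      using mn01[OF that] by (intro ind_int) auto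
    show "((\<lambda>t. if t \<le> y i p then 1 else 0) has_integral y i p) {0..1}" if "i \<in> V" "p \<in> P" for i p
      using y01[OF that] by (intro ind_int) auto
    show "((\<lambda>t::real. 1::real) has_integral 1) {0..1}"
      using has_integral_const_real[of "1::real" 0 1] by simp
  qed
  have "dual_fun V P Cs D th lam \<le> (\<Sum>C\<in>Cs. \<Sum>d\<in>D C. th C d * mn C d)
      + (\<Sum>i\<in>V. lam i * ((\<Sum>p\<in>P. y i p) - 1))"
    using has_integral_le[OF has_integral_const_real[of "dual_fun V P Cs D th lam" 0 1] hint] le by simp
  also have "(\<Sum>i\<in>V. lam i * ((\<Sum>p\<in>P. y i p) - 1)) = 0" using ysum by simp
  also have "(\<Sum>C\<in>Cs. \<Sum>d\<in>D C. th C d * mn C d) \<le> lp_obj Cs D th yC"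
    unfolding lp_obj_def
  proof (intro sum_mono)
    fix C d assume C: "C \<in> Cs" and d: "d \<in> D C"
    have "yC C d \<le> mn C d" using mnge[OF C, of "yC C d" d] feas C d by (auto simp: lp_feasible_def)
    then show "th C d * mn C d \<le> th C d * yC C d"
      using thnonpos C d by (intro mult_left_mono_neg) auto
  qed
  finally show ?thesis by simp
qed


lemma lp_construct:
  assumes y01: "\<forall>i\<in>V. \<forall>p\<in>P. 0 \<le> y i p \<and> y i p \<le> 1"
    and ysum: "\<forall>i\<in>V. (\<Sum>p\<in>P. y i p) = 1"
  shows "\<exists>yC. lp_feasible V P Cs D y yC \<and>
     lp_obj Cs D th yC \<le> (\<Sum>C\<in>Cs. \<Sum>d\<in>D C. th C d * Min ((\<lambda>l. y l (d l)) ` C))"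
proof -
  define m where "m = (\<lambda>C d. Min ((\<lambda>l. y l (d l)) ` C))"
  define R where "R = (\<lambda>C. 1 - (\<Sum>d\<in>D C. m C d))"
  define r where "r = (\<lambda>C k p. y k p - (\<Sum>d\<in>D C. if d k = p then m C d else 0))"
  define yC where "yC = (\<lambda>C p. (if p \<in> D C then m C p else 0)
      + (if R C > 0 then R C * (\<Prod>k\<in>C. r C k (p k) / R C) else 0))"
  have m0: "0 \<le> m C d" and mle: "m C d \<le> y l (d l)"
    if C: "C \<in> Cs" and d: "d \<in> D C" and l: "l \<in> C" for C d l
  proof -
    have "m C d \<in> (\<lambda>l. y l (d l)) ` C"
      unfolding m_def using finC[OF C] cliques C by (intro Min_in) auto
    then obtain l' where "l' \<in> C" "m C d = y l' (d l')" by auto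
    then show "0 \<le> m C d" using y01 Dmem[OF C d] by auto
    show "m C d \<le> y l (d l)" unfolding m_def using finC[OF C] l by (intro Min_le) auto
  qed
  have F2: "(\<Sum>d\<in>D C. if d k = p then m C d else 0) \<le> y k p"
    if C: "C \<in> Cs" and k: "k \<in> C" and p: "p \<in> P" for C k p
  proof (cases "\<exists>d0\<in>D C. d0 k = p")
    case True
    then obtain d0 where d0: "d0 \<in> D C" "d0 k = p" by blast
    have "(\<Sum>d\<in>D C. if d k = p then m C d else 0) = m C d0 + (\<Sum>d\<in>D C - {d0}. if d k = p then m C d else 0)"
      using d0 finD[OF C] by (simp add: sum.remove)
    also have "(\<Sum>d\<in>D C - {d0}. if d k = p then m C d else 0) = 0"
      using potts C d0 k by (intro sum.neutral) force
    finally show ?thesis using mle[OF C d0(1) k] d0 by simp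
  next
    case False
    then have "(\<Sum>d\<in>D C. if d k = p then m C d else 0) = 0" by (intro sum.neutral) auto
    then show ?thesis using y01 k p cliques C by auto
  qed
  have r0: "0 \<le> r C k p" if "C \<in> Cs" "k \<in> C" "p \<in> P" for C k p
    using F2[OF that] by (simp add: r_def)
  have F4: "(\<Sum>p\<in>P. r C k p) = R C" if C: "C \<in> Cs" and k: "k \<in> C" for C k
  proof -
    have "(\<Sum>p\<in>P. \<Sum>d\<in>D C. if d k = p then m C d else 0) = (\<Sum>d\<in>D C. \<Sum>p\<in>P. if d k = p then m C d else 0)"
      by (rule sum.swap)
    also have "\<dots> = (\<Sum>d\<in>D C. m C d)"
      using Dmem[OF C _ k] finP by (intro sum.cong refl) (simp add: sum.delta)
    finally have e: "(\<Sum>p\<in>P. \<Sum>d\<in>D C. if d k = p then m C d else 0) = (\<Sum>d\<in>D C. m C d)" .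
    have "(\<Sum>p\<in>P. r C k p) = (\<Sum>p\<in>P. y k p) - (\<Sum>p\<in>P. \<Sum>d\<in>D C. if d k = p then m C d else 0)"
      by (simp add: r_def sum_subtractf)
    then show ?thesis using e ysum k C cliques by (auto simp: R_def)
  qed
  have R0: "0 \<le> R C" if C: "C \<in> Cs" for C
  proof -
    obtain k where k: "k \<in> C" using cliques C by auto
    show ?thesis using F4[OF C k] r0[OF C k] by (metis sum_nonneg)
  qed
  have first: "(\<Sum>p\<in>{p \<in> C \<rightarrow>\<^sub>E P. p l = p0}. if p \<in> D C then m C p else 0)
      = (\<Sum>d\<in>D C. if d l = p0 then m C d else 0)" if C: "C \<in> Cs" for C l p0
  proof -
    have fin: "finite {p \<in> C \<rightarrow>\<^sub>E P. p l = p0}" using finC[OF C] finP by (intro finite_subset[OF _ finite_PiE]) auto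
    have "(\<Sum>p\<in>{p \<in> C \<rightarrow>\<^sub>E P. p l = p0}. if p \<in> D C then m C p else 0)
        = (\<Sum>p\<in>{p \<in> C \<rightarrow>\<^sub>E P. p l = p0} \<inter> D C. m C p)"
      using fin by (rule sum.inter_restrict[symmetric])
    also have "{p \<in> C \<rightarrow>\<^sub>E P. p l = p0} \<inter> D C = {d \<in> D C. d l = p0}" using Dsub C by auto
    also have "(\<Sum>d\<in>{d \<in> D C. d l = p0}. m C d) = (\<Sum>d\<in>D C. if d l = p0 then m C d else 0)"
      using finD[OF C] by (rule sum.inter_filter)
    finally show ?thesis .
  qed
  have second: "(\<Sum>p\<in>{p \<in> C \<rightarrow>\<^sub>E P. p l = p0}. if R C > 0 then R C * (\<Prod>k\<in>C. r C k (p k) / R C) else 0)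
      = r C l p0" if C: "C \<in> Cs" and l: "l \<in> C" and p0: "p0 \<in> P" for C l p0
  proof (cases "R C > 0")
    case True
    have S: "{p \<in> C \<rightarrow>\<^sub>E P. p l = p0} = PiE C (\<lambda>k. if k = l then {p0} else P)"
    proof (intro set_eqI iffI)
      fix p assume "p \<in> {p \<in> C \<rightarrow>\<^sub>E P. p l = p0}"
      then have a: "\<forall>k\<in>C. p k \<in> P" "p \<in> extensional C" "p l = p0" by (auto simp: PiE_iff)
      have "\<forall>k\<in>C. p k \<in> (if k = l then {p0} else P)" using a by auto
      then show "p \<in> PiE C (\<lambda>k. if k = l then {p0} else P)" using a(2) by (simp add: PiE_iff)
    next
      fix p assume "p \<in> PiE C (\<lambda>k. if k = l then {p0} else P)"
      then have a: "\<forall>k\<in>C. p k \<in> (if k = l then {p0} else P)" "p \<in> extensional C" by (auto simp: PiE_iff)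
      have "\<forall>k\<in>C. p k \<in> P" using a(1) p0 by (metis singletonD)
      moreover have "p l = p0" using a(1) l by auto
      ultimately show "p \<in> {p \<in> C \<rightarrow>\<^sub>E P. p l = p0}" using a(2) by (simp add: PiE_iff)
    qed
    have "(\<Sum>p\<in>PiE C (\<lambda>k. if k = l then {p0} else P). \<Prod>k\<in>C. r C k (p k) / R C)
        = (\<Prod>k\<in>C. \<Sum>q\<in>(if k = l then {p0} else P). r C k q / R C)"
      by (rule prod_sum_PiE[symmetric]) (use finC[OF C] finP in auto)
    also have "\<dots> = (\<Prod>k\<in>C. if k = l then r C l p0 / R C else 1)"
    proof (rule prod.cong[OF refl])
      fix k assume k: "k \<in> C"
      show "(\<Sum>q\<in>(if k = l then {p0} else P). r C k q / R C) = (if k = l then r C l p0 / R C else 1)"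
      proof (cases "k = l")
        case False
        have "(\<Sum>q\<in>P. r C k q / R C) = (\<Sum>q\<in>P. r C k q) / R C" by (simp add: sum_divide_distrib)
        also have "\<dots> = 1" using F4[OF C k] True by simp
        finally show ?thesis using False by simp
      qed simp
    qed
    also have "\<dots> = r C l p0 / R C" using finC[OF C] l by (simp add: prod.delta)
    finally have "(\<Sum>p\<in>{p \<in> C \<rightarrow>\<^sub>E P. p l = p0}. \<Prod>k\<in>C. r C k (p k) / R C) = r C l p0 / R C"
      using S by simp
    then show ?thesis using True by (simp add: sum_distrib_left[symmetric])
  next
    case False
    then have "R C = 0" using R0[OF C] by simp
    then have "(\<Sum>p\<in>P. r C l p) = 0" using F4[OF C l] by simp
    then have "r C l p0 = 0" using r0[OF C l] finP p0 by (simp add: sum_nonneg_eq_0_iff)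
    then show ?thesis using False by simp
  qed
  have marg: "(\<Sum>p\<in>{p \<in> C \<rightarrow>\<^sub>E P. p l = p0}. yC C p) = y l p0"
    if C: "C \<in> Cs" and l: "l \<in> C" and p0: "p0 \<in> P" for C l p0
    unfolding yC_def sum.distrib first[OF C] second[OF C l p0] by (simp add: r_def)
  have prodnn: "0 \<le> (if R C > 0 then R C * (\<Prod>k\<in>C. r C k (p k) / R C) else 0)"
    if C: "C \<in> Cs" and p: "p \<in> C \<rightarrow>\<^sub>E P" for C p
  proof (cases "R C > 0")
    case True
    have "0 \<le> (\<Prod>k\<in>C. r C k (p k) / R C)"
    proof (rule prod_nonneg)
      fix k assume k: "k \<in> C"
      then have "p k \<in> P" using p by (simp add: PiE_iff)
      then have "0 \<le> r C k (p k)" using r0[OF C k] by simp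
      then show "0 \<le> r C k (p k) / R C" using True by simp
    qed
    then show ?thesis using True by simp
  qed simp
  have yC0: "0 \<le> yC C p" if C: "C \<in> Cs" and p: "p \<in> C \<rightarrow>\<^sub>E P" for C p
  proof -
    obtain l0 where l0: "l0 \<in> C" using cliques C by auto
    have "0 \<le> (if p \<in> D C then m C p else 0)" using m0[OF C _ l0] by simp
    moreover have "0 \<le> (if R C > 0 then R C * (\<Prod>k\<in>C. r C k (p k) / R C) else 0)"
      using prodnn[OF C p] by simp
    ultimately show ?thesis by (simp add: yC_def)
  qed
  have yCle: "yC C p \<le> y l (p l)" if C: "C \<in> Cs" and p: "p \<in> C \<rightarrow>\<^sub>E P" and l: "l \<in> C" for C p l
  proof -
    have "p l \<in> P" using p l by auto
    have fin: "finite {q \<in> C \<rightarrow>\<^sub>E P. q l = p l}" using finC[OF C] finP by (intro finite_subset[OF _ finite_PiE]) auto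
    have "yC C p \<le> (\<Sum>q\<in>{q \<in> C \<rightarrow>\<^sub>E P. q l = p l}. yC C q)"
      by (rule member_le_sum) (use p fin yC0[OF C] in auto)
    then show ?thesis using marg[OF C l \<open>p l \<in> P\<close>] by simp
  qed
  have feas: "lp_feasible V P Cs D y yC"
    unfolding lp_feasible_def
  proof (intro conjI ballI)
    show "0 \<le> y i p" "y i p \<le> 1" if "i \<in> V" "p \<in> P" for i p using y01 that by auto
    show "0 \<le> yC C p" if "C \<in> Cs" "p \<in> C \<rightarrow>\<^sub>E P" for C p using yC0 that .
    show "yC C p \<le> 1" if C: "C \<in> Cs" and p: "p \<in> C \<rightarrow>\<^sub>E P" for C p
    proof -
      obtain l where l: "l \<in> C" using cliques C by auto
      have "p l \<in> P" using p l by (simp add: PiE_iff)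
      moreover have "l \<in> V" using cliques C l by auto
      ultimately show ?thesis using yCle[OF C p l] y01 by force
    qed
    show "yC C d \<le> y l (d l)" if C: "C \<in> Cs" and "d \<in> D C" "l \<in> C" for C d l
      using yCle[OF C _ \<open>l \<in> C\<close>] Dsub C that by auto
    show "(\<Sum>p\<in>P. y i p) = 1" if "i \<in> V" for i using ysum that by auto
    show "(\<Sum>p\<in>{p \<in> C \<rightarrow>\<^sub>E P. p l = p0}. yC C p) = y l p0" if "C \<in> Cs" "p0 \<in> P" "l \<in> C" for C p0 l
      using marg that by auto
  qed
  have "lp_obj Cs D th yC \<le> (\<Sum>C\<in>Cs. \<Sum>d\<in>D C. th C d * m C d)"
    unfolding lp_obj_def
  proof (intro sum_mono)
    fix C d assume C: "C \<in> Cs" and d: "d \<in> D C"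
    have "d \<in> C \<rightarrow>\<^sub>E P" using Dsub C d by auto
    from prodnn[OF C this] have "0 \<le> (if R C > 0 then R C * (\<Prod>k\<in>C. r C k (d k) / R C) else 0)" .
    then have "m C d \<le> yC C d" using d by (simp add: yC_def)
    then show "th C d * yC C d \<le> th C d * m C d"
      using thnonpos C d by (intro mult_left_mono_neg) auto
  qed
  with feas show ?thesis unfolding m_def by blast
qed


lemma main:
  "\<exists>v. (\<exists>y yC. lp_feasible V P Cs D y yC \<and> lp_obj Cs D th yC = v)
           \<and> (\<forall>y yC. lp_feasible V P Cs D y yC \<longrightarrow> v \<le> lp_obj Cs D th yC)
           \<and> (\<exists>lam. dual_fun V P Cs D th lam = v)
           \<and> (\<forall>lam. dual_fun V P Cs D th lam \<le> v)"
proof -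
  let ?X = "Xset V P"
  have finX: "finite ?X" using finite_Xset[OF finV finP] .
  obtain p0 where p0: "p0 \<in> P" using Pne by auto
  define x0 where "x0 = restr V P (\<lambda>i p. if p = p0 then 1 else 0)"
  have x0X: "x0 \<in> ?X" unfolding x0_def by (rule restr_in_Xset) (auto simp: binary_y_def)
  define \<mu>0 where "\<mu>0 = (\<lambda>x. if x = x0 then 1 else (0::real))"
  have "feas ?X V (gv P) \<mu>0"
    unfolding feas_def
  proof (intro conjI ballI)
    show "0 \<le> \<mu>0 x" for x by (simp add: \<mu>0_def)
    show "(\<Sum>x\<in>?X. \<mu>0 x) = 1" using finX x0X by (simp add: \<mu>0_def)
    fix i assume i: "i \<in> V"
    have "(\<Sum>x\<in>?X. \<mu>0 x * gv P x i) = gv P x0 i"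
    proof -
      have "(\<Sum>x\<in>?X. \<mu>0 x * gv P x i) = (\<Sum>x\<in>?X. if x = x0 then gv P x i else 0)"
        by (intro sum.cong refl) (simp add: \<mu>0_def)
      then show ?thesis using finX x0X by (simp add: sum.delta)
    qed
    also have "\<dots> = 0" using i p0 finP by (simp add: gv_def x0_def restr_def)
    finally show "(\<Sum>x\<in>?X. \<mu>0 x * gv P x i) = 0" .
  qed
  then obtain v \<mu> lam where mu: "feas ?X V (gv P) \<mu>" "(\<Sum>x\<in>?X. \<mu> x * Fv Cs D th x) \<le> v"
    and lam: "\<forall>x\<in>?X. v \<le> Fv Cs D th x + (\<Sum>i\<in>V. lam i * gv P x i)"
    using lp_dual[OF finX finV, of "gv P" "Fv Cs D th"] by blast
  have mu0: "\<forall>x\<in>?X. 0 \<le> \<mu> x" and mu1: "(\<Sum>x\<in>?X. \<mu> x) = 1"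
    and mub: "\<forall>i\<in>V. (\<Sum>x\<in>?X. \<mu> x * gv P x i) = 0" using mu(1) by (auto simp: feas_def)
  have xb: "x i p \<in> {0,1}" if "x \<in> ?X" "i \<in> V" "p \<in> P" for x i p
    using Xset_binary[OF that(1)] that by (auto simp: binary_y_def)
  define y' where "y' = (\<lambda>i p. \<Sum>x\<in>?X. \<mu> x * x i p)"
  have y01: "\<forall>i\<in>V. \<forall>p\<in>P. 0 \<le> y' i p \<and> y' i p \<le> 1"
  proof (intro ballI conjI)
    fix i p assume i: "i \<in> V" and p: "p \<in> P"
    show "0 \<le> y' i p" unfolding y'_def
    proof (intro sum_nonneg mult_nonneg_nonneg)
      fix x assume x: "x \<in> ?X"
      show "0 \<le> \<mu> x" using mu0 x by auto
      show "0 \<le> x i p" using xb[OF x i p] by auto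
    qed
    have "y' i p \<le> (\<Sum>x\<in>?X. \<mu> x)" unfolding y'_def
    proof (intro sum_mono)
      fix x assume x: "x \<in> ?X"
      show "\<mu> x * x i p \<le> \<mu> x" using mu0 x xb[OF x i p] by auto
    qed
    then show "y' i p \<le> 1" using mu1 by simp
  qed
  have ysum: "\<forall>i\<in>V. (\<Sum>p\<in>P. y' i p) = 1"
  proof
    fix i assume i: "i \<in> V"
    have "(\<Sum>p\<in>P. y' i p) = (\<Sum>x\<in>?X. \<Sum>p\<in>P. \<mu> x * x i p)"
      unfolding y'_def by (rule sum.swap)
    also have "\<dots> = (\<Sum>x\<in>?X. \<mu> x * gv P x i + \<mu> x)"
      by (intro sum.cong refl) (simp add: gv_def sum_distrib_left algebra_simps)
    also have "\<dots> = 1" using mub i mu1 by (simp add: sum.distrib)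
    finally show "(\<Sum>p\<in>P. y' i p) = 1" .
  qed
  obtain yC where yC: "lp_feasible V P Cs D y' yC"
    "lp_obj Cs D th yC \<le> (\<Sum>C\<in>Cs. \<Sum>d\<in>D C. th C d * Min ((\<lambda>l. y' l (d l)) ` C))"
    using lp_construct[OF y01 ysum] by blast
  define ind where "ind = (\<lambda>(C::'v set) (d::'v \<Rightarrow> 'p) (x::'v \<Rightarrow> 'p \<Rightarrow> real). if \<forall>l\<in>C. x l (d l) = 1 then 1 else (0::real))"
  have swap: "(\<Sum>x\<in>?X. \<mu> x * Fv Cs D th x) = (\<Sum>C\<in>Cs. \<Sum>d\<in>D C. th C d * (\<Sum>x\<in>?X. \<mu> x * ind C d x))"
  proof -
    have "(\<Sum>x\<in>?X. \<mu> x * Fv Cs D th x) = (\<Sum>x\<in>?X. \<Sum>C\<in>Cs. \<Sum>d\<in>D C. th C d * (\<mu> x * ind C d x))"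
      unfolding Fv_def ind_def by (simp add: sum_distrib_left algebra_simps)
    also have "\<dots> = (\<Sum>C\<in>Cs. \<Sum>x\<in>?X. \<Sum>d\<in>D C. th C d * (\<mu> x * ind C d x))"
      by (rule sum.swap)
    also have "\<dots> = (\<Sum>C\<in>Cs. \<Sum>d\<in>D C. \<Sum>x\<in>?X. th C d * (\<mu> x * ind C d x))"
      by (intro sum.cong refl sum.swap)
    also have "\<dots> = (\<Sum>C\<in>Cs. \<Sum>d\<in>D C. th C d * (\<Sum>x\<in>?X. \<mu> x * ind C d x))"
      by (simp add: sum_distrib_left)
    finally show ?thesis .
  qed
  have "(\<Sum>C\<in>Cs. \<Sum>d\<in>D C. th C d * Min ((\<lambda>l. y' l (d l)) ` C)) \<le> (\<Sum>x\<in>?X. \<mu> x * Fv Cs D th x)"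
    unfolding swap
  proof (intro sum_mono)
    fix C d assume C: "C \<in> Cs" and d: "d \<in> D C"
    have "(\<Sum>x\<in>?X. \<mu> x * ind C d x) \<le> Min ((\<lambda>l. y' l (d l)) ` C)"
    proof (subst Min_ge_iff)
      show "finite ((\<lambda>l. y' l (d l)) ` C)" using finC[OF C] by simp
      show "(\<lambda>l. y' l (d l)) ` C \<noteq> {}" using cliques C by auto
      show "\<forall>a\<in>(\<lambda>l. y' l (d l)) ` C. (\<Sum>x\<in>?X. \<mu> x * ind C d x) \<le> a"
      proof
        fix a assume "a \<in> (\<lambda>l. y' l (d l)) ` C"
        then obtain l where l: "l \<in> C" and a: "a = y' l (d l)" by auto
        have "(\<Sum>x\<in>?X. \<mu> x * ind C d x) \<le> (\<Sum>x\<in>?X. \<mu> x * x l (d l))"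
        proof (intro sum_mono mult_left_mono)
          fix x assume x: "x \<in> ?X"
          show "0 \<le> \<mu> x" using mu0 x by auto
          have "x l (d l) \<in> {0,1}" using xb[OF x] Dmem[OF C d l] by auto
          then show "ind C d x \<le> x l (d l)" using l by (auto simp: ind_def)
        qed
        then show "(\<Sum>x\<in>?X. \<mu> x * ind C d x) \<le> a" by (simp add: a y'_def)
      qed
    qed
    then show "th C d * Min ((\<lambda>l. y' l (d l)) ` C) \<le> th C d * (\<Sum>x\<in>?X. \<mu> x * ind C d x)"
      using thnonpos C d by (intro mult_left_mono_neg) auto
  qed
  with yC(2) mu(2) have objle: "lp_obj Cs D th yC \<le> v" by linarith
  have dge: "v \<le> dual_fun V P Cs D th lam" using dual_ge lam by blast
  have wk: "dual_fun V P Cs D th lam' \<le> lp_obj Cs D th yC'" if "lp_feasible V P Cs D y yC'" for lam' y yC'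
    using weak_dual[OF that] .
  have eq: "lp_obj Cs D th yC = v" using objle dge wk[OF yC(1), of lam] by linarith
  show ?thesis
  proof (intro exI conjI allI impI)
    show "lp_feasible V P Cs D y' yC" "lp_obj Cs D th yC = v" using yC(1) eq by auto
    show "v \<le> lp_obj Cs D th yC'" if "lp_feasible V P Cs D y yC'" for y yC'
      using dge wk[OF that, of lam] by linarith
    show "dual_fun V P Cs D th lam = v" using dge wk[OF yC(1), of lam] eq by linarith
    show "dual_fun V P Cs D th lam' \<le> v" for lam' using wk[OF yC(1), of lam'] eq by linarith
  qed
qed

end

theorem theorem6:
  fixes V :: "'v set" and P :: "'p set" and Cs :: "'v set set"
    and D :: "'v set \<Rightarrow> ('v \<Rightarrow> 'p) set"
    and th :: "'v set \<Rightarrow> ('v \<Rightarrow> 'p) \<Rightarrow> real"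
  assumes finV: "finite V" and finP: "finite P" and Pne: "P \<noteq> {}"
    and finCs: "finite Cs"
    and cliques: "\<forall>C\<in>Cs. C \<noteq> {} \<and> C \<subseteq> V"
    and Dsub: "\<forall>C\<in>Cs. D C \<subseteq> C \<rightarrow>\<^sub>E P"
    and thnonpos: "\<forall>C\<in>Cs. \<forall>d\<in>D C. th C d \<le> 0"
    and potts: "\<forall>C\<in>Cs. \<forall>d'\<in>D C. \<forall>d''\<in>D C. d' \<noteq> d'' \<longrightarrow> (\<forall>i\<in>C. d' i \<noteq> d'' i)"
  shows "\<exists>v. (\<exists>y yC. lp_feasible V P Cs D y yC \<and> lp_obj Cs D th yC = v)
           \<and> (\<forall>y yC. lp_feasible V P Cs D y yC \<longrightarrow> v \<le> lp_obj Cs D th yC)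
           \<and> (\<exists>lam. dual_fun V P Cs D th lam = v)
           \<and> (\<forall>lam. dual_fun V P Cs D th lam \<le> v)"
proof -
  interpret setting V P Cs D th
    by (unfold_locales) (fact assms)+
  show ?thesis by (rule main)
qed

end
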